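(* Let $E$ be a $p$-adic field, $\psi$ a nontrivial additive character of $E$, and $f_1,\dots,f_n$ analytic functions on a ball $B\subset E^N$ centered at $0$ whose differentials $d_0f_1,\dots,d_0f_n$ at $0$ are linearly independent. Then there is $a\in E^*$ such that for all $t\in E^*$ with $|t|$ sufficiently large, the functions $\psi(tf_1),\dots,\psi(tf_n)$ restricted to $t^{-1}aB$ are linearly independent. *)

theory Defs
  imports Complex_Main
begin

definition nonarch_abs :: "('a::field \<Rightarrow> real) \<Rightarrow> bool" where
  "nonarch_abs absv \<longleftrightarrow>
     (\<forall>x. absv x \<ge> 0) \<and> (\<forall>x. absv x = 0 \<longleftrightarrow> x = 0) \<and>
     (\<forall>x y. absv (x * y) = absv x * absv y) \<and>
     (\<forall>x y. absv (x + y) \<le> max (absv x) (absv y))"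

definition abs_complete :: "('a::field \<Rightarrow> real) \<Rightarrow> bool" where
  "abs_complete absv \<longleftrightarrow>
     (\<forall>X :: nat \<Rightarrow> 'a.
        (\<forall>\<epsilon>>0. \<exists>N. \<forall>m\<ge>N. \<forall>k\<ge>N. absv (X m - X k) < \<epsilon>) \<longrightarrow>
        (\<exists>L. \<forall>\<epsilon>>0. \<exists>N. \<forall>m\<ge>N. absv (X m - L) < \<epsilon>))"

text \<open>A p-adic field: a field of characteristic 0 (type class) with a nontrivial,
  discretely valued, complete non-archimedean absolute value with finite residue
  field, i.e. a non-archimedean local field of characteristic 0 (= finite extension
  of some Q_p).\<close>
definition p_adic_field :: "('a::field_char_0 \<Rightarrow> real) \<Rightarrow> bool" where
  "p_adic_field absv \<longleftrightarrow>
     nonarch_abs absv \<and>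
     (\<exists>x. x \<noteq> 0 \<and> absv x \<noteq> 1) \<and>
     (\<exists>r<1. \<forall>x. absv x < 1 \<longrightarrow> absv x \<le> r) \<and>
     abs_complete absv \<and>
     finite ({x. absv x \<le> 1} //
             {(x, y). absv x \<le> 1 \<and> absv y \<le> 1 \<and> absv (x - y) < 1})"

definition nontriv_add_char :: "('a::field \<Rightarrow> real) \<Rightarrow> ('a \<Rightarrow> complex) \<Rightarrow> bool" where
  "nontriv_add_char absv \<psi> \<longleftrightarrow>
     (\<forall>x y. \<psi> (x + y) = \<psi> x * \<psi> y) \<and>
     (\<forall>x. cmod (\<psi> x) = 1) \<and>
     (\<forall>x. \<forall>\<epsilon>>0. \<exists>\<delta>>0. \<forall>y. absv (y - x) < \<delta> \<longrightarrow> cmod (\<psi> y - \<psi> x) < \<epsilon>) \<and>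
     (\<exists>x. \<psi> x \<noteq> 1)"

definition vnorm :: "('a::field \<Rightarrow> real) \<Rightarrow> ('n::finite \<Rightarrow> 'a) \<Rightarrow> real" where
  "vnorm absv x = Max (range (\<lambda>i. absv (x i)))"

definition vball0 :: "('a::field \<Rightarrow> real) \<Rightarrow> real \<Rightarrow> ('n::finite \<Rightarrow> 'a) set" where
  "vball0 absv r = {x. vnorm absv x \<le> r}"

definition vscale :: "'a::field \<Rightarrow> ('n \<Rightarrow> 'a) \<Rightarrow> ('n \<Rightarrow> 'a)" where
  "vscale c x = (\<lambda>i. c * x i)"

definition mdeg :: "('n::finite \<Rightarrow> nat) \<Rightarrow> nat" where
  "mdeg \<alpha> = (\<Sum>i\<in>UNIV. \<alpha> i)"

definition mmonom :: "('n::finite \<Rightarrow> 'a::field) \<Rightarrow> ('n \<Rightarrow> nat) \<Rightarrow> 'a" where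
  "mmonom z \<alpha> = (\<Prod>i\<in>UNIV. z i ^ \<alpha> i)"

definition ps_sums :: "('a::field \<Rightarrow> real) \<Rightarrow> (('n::finite \<Rightarrow> nat) \<Rightarrow> 'a)
                       \<Rightarrow> ('n \<Rightarrow> 'a) \<Rightarrow> 'a \<Rightarrow> bool" where
  "ps_sums absv c z v \<longleftrightarrow>
     (\<forall>\<epsilon>>0. finite {\<alpha>. absv (c \<alpha> * mmonom z \<alpha>) \<ge> \<epsilon>}) \<and>
     (\<forall>\<epsilon>>0. \<exists>K. \<forall>k\<ge>K.
        absv ((\<Sum>\<alpha>\<in>{\<alpha>. mdeg \<alpha> \<le> k}. c \<alpha> * mmonom z \<alpha>) - v) < \<epsilon>)"

definition analytic_on_set :: "('a::field \<Rightarrow> real) \<Rightarrow> ('n::finite \<Rightarrow> 'a) set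
                               \<Rightarrow> (('n \<Rightarrow> 'a) \<Rightarrow> 'a) \<Rightarrow> bool" where
  "analytic_on_set absv S f \<longleftrightarrow>
     (\<forall>y\<in>S. \<exists>\<rho>>0. \<exists>c. \<forall>x\<in>S. vnorm absv (\<lambda>i. x i - y i) < \<rho> \<longrightarrow>
        ps_sums absv c (\<lambda>i. x i - y i) (f x))"

definition has_diff0 :: "('a::field \<Rightarrow> real) \<Rightarrow> (('n::finite \<Rightarrow> 'a) \<Rightarrow> 'a)
                          \<Rightarrow> ('n \<Rightarrow> 'a) \<Rightarrow> bool" where
  "has_diff0 absv f l \<longleftrightarrow>
     (\<forall>\<epsilon>>0. \<exists>\<delta>>0. \<forall>x. vnorm absv x < \<delta> \<longrightarrow>
        absv (f x - f (\<lambda>_. 0) - (\<Sum>i\<in>UNIV. l i * x i)) \<le> \<epsilon> * vnorm absv x)"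

definition forms_lin_indep :: "nat \<Rightarrow> (nat \<Rightarrow> ('n::finite \<Rightarrow> 'a::field)) \<Rightarrow> bool" where
  "forms_lin_indep n l \<longleftrightarrow>
     (\<forall>cf :: nat \<Rightarrow> 'a. (\<forall>i. (\<Sum>j<n. cf j * l j i) = 0) \<longrightarrow> (\<forall>j<n. cf j = 0))"

definition funs_lin_indep_on :: "nat \<Rightarrow> (nat \<Rightarrow> 'b \<Rightarrow> complex) \<Rightarrow> 'b set \<Rightarrow> bool" where
  "funs_lin_indep_on n g S \<longleftrightarrow>
     (\<forall>cf :: nat \<Rightarrow> complex. (\<forall>x\<in>S. (\<Sum>j<n. cf j * g j x) = 0) \<longrightarrow> (\<forall>j<n. cf j = 0))"

end

theory Submission imports Defs begin

lemma artin:
  fixes S :: "'b set" and \<chi> :: "nat \<Rightarrow> 'b \<Rightarrow> complex" and p :: "'b \<Rightarrow> 'b \<Rightarrow> 'b"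
  assumes add: "\<And>x y. x\<in>S \<Longrightarrow> y\<in>S \<Longrightarrow> p x y \<in> S"
  and ne: "z \<in> S"
  and hom: "\<And>j x y. x\<in>S \<Longrightarrow> y\<in>S \<Longrightarrow> \<chi> j (p x y) = \<chi> j x * \<chi> j y"
  and nz: "\<And>j x. x\<in>S \<Longrightarrow> \<chi> j x \<noteq> 0"
  and dist: "\<And>j k. j<k \<Longrightarrow> k<n \<Longrightarrow> \<exists>y\<in>S. \<chi> j y \<noteq> \<chi> k y"
  shows "\<forall>cf. (\<forall>x\<in>S. (\<Sum>j<n. cf j * \<chi> j x) = 0) \<longrightarrow> (\<forall>j<n. cf j = 0)"
using dist proof (induction n)
  case 0 show ?case by simp
next
  case (Suc n)
  show ?case
  proof (rule allI, rule impI)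
    fix cf assume h: "\<forall>x\<in>S. (\<Sum>j<Suc n. cf j * \<chi> j x) = 0"
    have lt: "cf j = 0" if "j < n" for j
    proof -
      obtain y where y: "y\<in>S" "\<chi> j y \<noteq> \<chi> n y" using Suc.prems[of j n] \<open>j<n\<close> by auto
      have "\<forall>x\<in>S. (\<Sum>k<n. (cf k * (\<chi> k y - \<chi> n y)) * \<chi> k x) = 0"
      proof
        fix x assume x: "x\<in>S"
        have e1: "(\<Sum>k<Suc n. cf k * \<chi> k (p y x)) = 0" using h add[OF y(1) x] by blast
        have e2: "(\<Sum>k<Suc n. cf k * \<chi> k x) = 0" using h x by blast
        have "(\<Sum>k<n. (cf k * (\<chi> k y - \<chi> n y)) * \<chi> k x) = (\<Sum>k<Suc n. (cf k * (\<chi> k y - \<chi> n y)) * \<chi> k x)" by simp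
        also have "\<dots> = (\<Sum>k<Suc n. cf k * \<chi> k (p y x) - \<chi> n y * (cf k * \<chi> k x))"
          by (intro sum.cong refl) (simp add: hom[OF y(1) x] algebra_simps)
        also have "\<dots> = (\<Sum>k<Suc n. cf k * \<chi> k (p y x)) - \<chi> n y * (\<Sum>k<Suc n. cf k * \<chi> k x)"
          by (simp only: sum_subtractf sum_distrib_left)
        also have "\<dots> = 0" using e1 e2 by simp
        finally show "(\<Sum>k<n. (cf k * (\<chi> k y - \<chi> n y)) * \<chi> k x) = 0" .
      qed
      moreover have "\<And>j k. j<k \<Longrightarrow> k<n \<Longrightarrow> \<exists>y\<in>S. \<chi> j y \<noteq> \<chi> k y" using Suc.prems by simp
      note IH = Suc.IH[OF this, rule_format, of "\<lambda>k. cf k * (\<chi> k y - \<chi> n y)"]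
      ultimately have "cf j * (\<chi> j y - \<chi> n y) = 0" using IH \<open>j<n\<close> by simp
      thus ?thesis using y(2) by simp
    qed
    have "(\<Sum>j<Suc n. cf j * \<chi> j z) = 0" using h ne by blast
    hence "cf n * \<chi> n z = 0" using lt by simp
    hence "cf n = 0" using nz[OF ne] by simp
    thus "\<forall>j<Suc n. cf j = 0" using lt less_Suc_eq by auto
  qed
qed

lemma circ:
  fixes w :: complex
  assumes "cmod w = 1" "cmod (w - 1) < 1"
  shows "cmod (w + 1) \<ge> 3/2"
proof -
  have a: "Re w ^ 2 + Im w ^ 2 = 1" using assms(1) cmod_power2[of w] by simp
  have "cmod (w - 1) ^ 2 < 1" using assms(2) by (simp add: power_less_one_iff)
  hence "(Re w - 1) ^ 2 + Im w ^ 2 < 1" using cmod_power2[of "w - 1"] by simp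
  hence "Re w > 1/2" using a by (simp add: power2_eq_square algebra_simps)
  moreover have "Re (w + 1) \<le> cmod (w + 1)" using complex_Re_le_cmod by blast
  ultimately show ?thesis by simp
qed

lemma na_basic:
  assumes "nonarch_abs absv"
  shows "absv 0 = 0" "absv 1 = 1" "\<And>x. absv (-x) = absv x" "\<And>x. absv x \<ge> 0"
    "\<And>x y. absv (x*y) = absv x * absv y" "\<And>x y. absv (x+y) \<le> max (absv x) (absv y)"
    "\<And>x. absv x = 0 \<longleftrightarrow> x = 0"
proof -
  note A = assms[unfolded nonarch_abs_def]
  show z: "absv 0 = 0" using A by auto
  have "absv 1 = absv 1 * absv 1" using A by (metis mult_1)
  moreover have "absv 1 \<noteq> 0" using A by auto
  ultimately show o: "absv 1 = 1" by (metis mult_cancel_right1)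
  show "\<And>x. absv (-x) = absv x"
  proof -
    fix x
    have m: "\<forall>x y. absv (x*y) = absv x * absv y" using A by auto
    have "absv (-x) ^ 2 = absv x ^ 2" unfolding power2_eq_square using m[rule_format, of "-x" "-x"] m[rule_format, of x x] by simp
    thus "absv (-x) = absv x" using A by (simp add: power2_eq_iff_nonneg)
  qed
  show "\<And>x. absv x \<ge> 0" "\<And>x y. absv (x*y) = absv x * absv y" "\<And>x y. absv (x+y) \<le> max (absv x) (absv y)"
    "\<And>x. absv x = 0 \<longleftrightarrow> x = 0" using A by auto
qed


lemma psi_small:
  assumes na: "nonarch_abs absv" and ch: "nontriv_add_char absv \<psi>"
  shows "\<exists>\<delta>>0. \<forall>z. absv z < \<delta> \<longrightarrow> \<psi> z = 1"
proof -
  note B = na_basic[OF na]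
  have add: "\<And>x y. \<psi> (x + y) = \<psi> x * \<psi> y" and n1: "\<And>x. cmod (\<psi> x) = 1"
    and cont: "\<And>x \<epsilon>. \<epsilon> > 0 \<Longrightarrow> \<exists>\<delta>>0. \<forall>y. absv (y - x) < \<delta> \<longrightarrow> cmod (\<psi> y - \<psi> x) < \<epsilon>"
    using ch unfolding nontriv_add_char_def by auto
  have nz: "\<psi> x \<noteq> 0" for x using n1[of x] by auto
  have "\<psi> 0 = \<psi> 0 * \<psi> 0" using add[of 0 0] by simp
  hence p0: "\<psi> 0 = 1" using nz[of 0] by simp
  obtain \<delta> where d: "\<delta> > 0" "\<And>y. absv y < \<delta> \<Longrightarrow> cmod (\<psi> y - 1) < 1"
    using cont[of 1 0] p0 by auto
  show ?thesis
  proof (intro exI[of _ \<delta>] conjI allI impI d)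
    fix z assume z: "absv z < \<delta>"
    have I: "absv ((2::'a)^m * z) \<le> absv z \<and> cmod (\<psi> ((2::'a)^m * z) - 1) \<ge> (3/2)^m * cmod (\<psi> z - 1)" for m
    proof (induction m)
      case 0 show ?case by simp
    next
      case (Suc m)
      define w where "w = (2::'a)^m * z"
      have e: "(2::'a)^Suc m * z = w + w" unfolding w_def by (simp add: algebra_simps)
      have aw: "absv w < \<delta>" using Suc.IH z unfolding w_def by linarith
      have a2: "absv (w + w) \<le> absv z" using B(6)[of w w] Suc.IH unfolding w_def by linarith
      have c1: "cmod (\<psi> w - 1) < 1" using d(2)[OF aw] .
      have c2: "cmod (\<psi> w + 1) \<ge> 3/2" using circ[OF n1 c1] .
      have "cmod (\<psi> (w + w) - 1) = cmod ((\<psi> w - 1) * (\<psi> w + 1))"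
        unfolding add[of w w] by (simp add: algebra_simps)
      also have "\<dots> = cmod (\<psi> w - 1) * cmod (\<psi> w + 1)" by (simp add: norm_mult)
      also have "\<dots> \<ge> cmod (\<psi> w - 1) * (3/2)" using c2 by (intro mult_left_mono) auto
      finally have "cmod (\<psi> (w + w) - 1) \<ge> (3/2) * cmod (\<psi> w - 1)" by simp
      moreover have "cmod (\<psi> w - 1) \<ge> (3/2)^m * cmod (\<psi> z - 1)" using Suc.IH unfolding w_def by blast
      ultimately have "cmod (\<psi> (w + w) - 1) \<ge> (3/2)^Suc m * cmod (\<psi> z - 1)" by simp
      thus ?case using a2 unfolding e by simp
    qed
    have lt: "(3/2)^m * cmod (\<psi> z - 1) < 1" for m
    proof -
      have "absv ((2::'a)^m * z) < \<delta>" using I[of m] z by linarith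
      thus ?thesis using d(2) I[of m] by fastforce
    qed
    show "\<psi> z = 1"
    proof (rule ccontr)
      assume "\<psi> z \<noteq> 1"
      hence c: "cmod (\<psi> z - 1) > 0" by simp
      obtain m where "1 / cmod (\<psi> z - 1) < (3/2::real)^m" using real_arch_pow[of "3/2"] by auto
      hence "1 < (3/2)^m * cmod (\<psi> z - 1)" using c by (simp add: field_simps)
      thus False using lt[of m] by simp
    qed
  qed
qed

lemma absv_pow:
  assumes na: "nonarch_abs absv"
  shows "absv (y ^ m) = absv y ^ m"
  by (induction m) (simp_all add: na_basic[OF na])

lemma absv_div:
  assumes na: "nonarch_abs absv"
  shows "absv (x / y) = absv x / absv y"
proof (cases "y = 0")
  case True thus ?thesis by (simp add: na_basic(1)[OF na])
next
  case False
  have "absv x = absv (x / y) * absv y" using False na_basic(5)[OF na, of "x/y" y] by simp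
  moreover have "absv y \<noteq> 0" using False na_basic(7)[OF na] by simp
  ultimately show ?thesis by simp
qed

lemma big:
  assumes na: "nonarch_abs absv" and x: "x \<noteq> 0" "absv x \<noteq> 1"
  shows "\<exists>a. a \<noteq> 0 \<and> absv a \<ge> K"
proof -
  note B = na_basic[OF na]
  obtain y where y: "y \<noteq> 0" "absv y > 1"
  proof (cases "absv x > 1")
    case True thus ?thesis using that x by auto
  next
    case False
    hence l: "absv x < 1" using x by simp
    have p: "absv x > 0" using x B(4)[of x] B(7)[of x] by simp
    have "absv (1 / x) = 1 / absv x" using absv_div[OF na] B(2) by simp
    also have "\<dots> > 1" using l p by simp
    finally show ?thesis using that[of "1/x"] x by simp
  qed
  obtain m where "K < absv y ^ m" using real_arch_pow[OF y(2)] by auto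
  thus ?thesis using y absv_pow[OF na] by (intro exI[of _ "y^m"]) auto
qed

lemma vnorm_le:
  fixes x :: "'n::finite \<Rightarrow> 'a::field"
  shows "vnorm absv x \<le> c \<longleftrightarrow> (\<forall>i. absv (x i) \<le> c)"
  unfolding vnorm_def by (subst Max_le_iff) auto

lemma vnorm_ge:
  fixes x :: "'n::finite \<Rightarrow> 'a::field"
  shows "absv (x i) \<le> vnorm absv x"
  using vnorm_le[of absv x "vnorm absv x"] by simp


theorem lemma2p7:
  fixes absv :: "'a::field_char_0 \<Rightarrow> real"
    and \<psi> :: "'a \<Rightarrow> complex"
    and r :: real
    and n :: nat
    and f :: "nat \<Rightarrow> ('n::finite \<Rightarrow> 'a) \<Rightarrow> 'a"
    and l :: "nat \<Rightarrow> ('n \<Rightarrow> 'a)"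
  assumes "p_adic_field absv"
    and "nontriv_add_char absv \<psi>"
    and "r > 0"
    and "\<forall>j<n. analytic_on_set absv (vball0 absv r) (f j)"
    and "\<forall>j<n. has_diff0 absv (f j) (l j)"
    and "forms_lin_indep n l"
  shows "\<exists>a. a \<noteq> 0 \<and> (\<exists>R. \<forall>t. t \<noteq> 0 \<and> absv t > R \<longrightarrow>
           funs_lin_indep_on n (\<lambda>j x. \<psi> (t * f j x))
             (vscale (a / t) ` vball0 absv r))"
proof (cases "n = 0")
  case True
  thus ?thesis by (intro exI[of _ 1]) (simp add: funs_lin_indep_on_def)
next
  case nP: False
  have na: "nonarch_abs absv" using assms(1) unfolding p_adic_field_def by blast
  obtain x1 where x1: "x1 \<noteq> 0" "absv x1 \<noteq> 1" using assms(1) unfolding p_adic_field_def by blast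
  note B = na_basic[OF na]
  have add: "\<And>x y. \<psi> (x + y) = \<psi> x * \<psi> y" and n1: "\<And>x. cmod (\<psi> x) = 1"
    using assms(2) unfolding nontriv_add_char_def by auto
  obtain x0 where x0: "\<psi> x0 \<noteq> 1" using assms(2) unfolding nontriv_add_char_def by auto
  have nz: "\<psi> x \<noteq> 0" for x using n1[of x] by auto
  have pos: "absv x > 0" if "x \<noteq> 0" for x using B(4)[of x] B(7)[of x] that by simp
  have dl: "\<exists>i. l j i \<noteq> l k i" if "j<n" "k<n" "j\<noteq>k" for j k
  proof (rule ccontr)
    assume "\<not> (\<exists>i. l j i \<noteq> l k i)"
    hence eq: "l j i = l k i" for i by auto
    define cf where "cf = (\<lambda>m. (if m = j then 1 else 0) - (if m = k then 1 else (0::'a)))"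
    have "(\<Sum>m<n. cf m * l m i) = 0" for i
    proof -
      have "(\<Sum>m<n. cf m * l m i) = (\<Sum>m<n. (if m = j then l j i else 0) - (if m = k then l k i else 0))"
        by (intro sum.cong) (auto simp: cf_def)
      also have "\<dots> = l j i - l k i" using that by (simp add: sum_subtractf)
      finally show ?thesis using eq by simp
    qed
    hence "cf j = 0" using assms(6) that unfolding forms_lin_indep_def by blast
    thus False using that by (simp add: cf_def)
  qed
  define P where "P = {(j,k,i). j<n \<and> k<n \<and> l j i \<noteq> l k i}"
  define D where "D = (\<lambda>(j,k,i). absv (l j i - l k i)) ` P"
  have "P \<subseteq> {..<n} \<times> {..<n} \<times> UNIV" unfolding P_def by auto
  hence "finite P" by (rule finite_subset) auto
  hence fD: "finite (insert 1 D)" unfolding D_def by simp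
  define mD where "mD = Min (insert 1 D)"
  have mDp: "mD > 0" unfolding mD_def using fD
    by (subst Min_gr_iff) (auto simp: D_def P_def intro!: pos)
  have mDle: "mD \<le> absv (l j i - l k i)" if "(j,k,i) \<in> P" for j k i
  proof -
    have "absv (l j i - l k i) \<in> D" unfolding D_def by (rule rev_image_eqI[OF that]) simp
    thus ?thesis unfolding mD_def using fD by (intro Min_le) auto
  qed
  obtain a where a: "a \<noteq> 0" "absv a \<ge> absv x0 / (r * mD)" using big[OF na x1] by blast
  have ap: "absv a > 0" using pos a by simp
  have aD: "absv a * r * absv (l j i - l k i) \<ge> absv x0" if "(j,k,i) \<in> P" for j k i
  proof -
    have "absv x0 \<le> absv a * (r * mD)" using a(2) mDp assms(3) by (simp add: field_simps)
    also have "\<dots> \<le> absv a * (r * absv (l j i - l k i))"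
      using mDle[OF that] ap assms(3) by (intro mult_left_mono) auto
    finally show ?thesis by (simp add: mult.assoc)
  qed
  define S where "S = (vball0 absv r :: ('n \<Rightarrow> 'a) set)"
  define \<chi> where "\<chi> = (\<lambda>j y. \<psi> (a * (\<Sum>i\<in>UNIV. l j i * y i)))"
  have Sadd: "(\<lambda>i. y i + y' i) \<in> S" if "y \<in> S" "y' \<in> S" for y y'
  proof -
    have "absv (y i) \<le> r" "absv (y' i) \<le> r" for i using that unfolding S_def vball0_def vnorm_le by auto
    hence "absv (y i + y' i) \<le> r" for i using B(6)[of "y i" "y' i"] by (meson max.bounded_iff order_trans)
    thus ?thesis unfolding S_def vball0_def vnorm_le by simp
  qed
  have S0: "(\<lambda>_. 0) \<in> S" unfolding S_def vball0_def vnorm_le using B(1) assms(3) by simp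
  have hom: "\<chi> j (\<lambda>i. y i + y' i) = \<chi> j y * \<chi> j y'" for j y y'
  proof -
    have "a * (\<Sum>i\<in>UNIV. l j i * (y i + y' i)) = a * (\<Sum>i\<in>UNIV. l j i * y i) + a * (\<Sum>i\<in>UNIV. l j i * y' i)"
      by (simp add: distrib_left sum.distrib)
    thus ?thesis unfolding \<chi>_def by (simp only: add)
  qed
  have chinz: "\<chi> j y \<noteq> 0" for j y unfolding \<chi>_def using nz by simp
  have dist: "\<exists>y\<in>S. \<chi> j y \<noteq> \<chi> k y" if "j<k" "k<n" for j k
  proof -
    have jk: "j < n" "j \<noteq> k" using that by auto
    obtain i where i: "l j i \<noteq> l k i" using dl[OF jk(1) \<open>k<n\<close> jk(2)] by blast
    hence Pi: "(j,k,i) \<in> P" using that unfolding P_def by auto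
    define d where "d = l j i - l k i"
    have d0: "d \<noteq> 0" using i unfolding d_def by simp
    define s where "s = x0 / (a * d)"
    define y where "y = (\<lambda>i'. if i' = i then s else 0)"
    have "absv s = absv x0 / (absv a * absv d)" unfolding s_def using absv_div[OF na] B(5) by simp
    also have "\<dots> \<le> r" using aD[OF Pi] pos[OF d0] ap unfolding d_def[symmetric]
      by (simp add: field_simps)
    finally have "y \<in> S" unfolding S_def vball0_def vnorm_le y_def using B(1) assms(3) by auto
    moreover have "\<chi> j y \<noteq> \<chi> k y"
    proof
      assume h: "\<chi> j y = \<chi> k y"
      have sj: "(\<Sum>i'\<in>UNIV. l m i' * y i') = l m i * s" for m
      proof -
        have "(\<Sum>i'\<in>UNIV. l m i' * y i') = (\<Sum>i'\<in>UNIV. if i' = i then l m i * s else 0)"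
          by (intro sum.cong) (auto simp: y_def)
        thus ?thesis by simp
      qed
      have "a * (l j i * s) = a * (l k i * s) + x0"
        unfolding s_def using a(1) d0 unfolding d_def by (simp add: field_simps)
      hence "\<chi> j y = \<chi> k y * \<psi> x0" unfolding \<chi>_def sj by (simp add: add)
      thus False using h chinz[of k y] x0 by simp
    qed
    ultimately show ?thesis by blast
  qed
  have artin': "\<forall>cf. (\<forall>y\<in>S. (\<Sum>j<n. cf j * \<chi> j y) = 0) \<longrightarrow> (\<forall>j<n. cf j = 0)"
    by (rule artin[where p = "\<lambda>y y' i. y i + y' i" and z = "\<lambda>_. 0"]) (auto intro: Sadd S0 dist simp: hom chinz)
  obtain \<delta>0 where d0: "\<delta>0 > 0" "\<And>z. absv z < \<delta>0 \<Longrightarrow> \<psi> z = 1"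
    using psi_small[OF na assms(2)] by blast
  define \<epsilon> where "\<epsilon> = \<delta>0 / (absv a * r + 1)"
  have ep: "\<epsilon> > 0" unfolding \<epsilon>_def using d0 ap assms(3) by (simp add: add_pos_pos)
  have "\<forall>j. \<exists>\<delta>. j < n \<longrightarrow> \<delta> > 0 \<and> (\<forall>x. vnorm absv x < \<delta> \<longrightarrow>
        absv (f j x - f j (\<lambda>_. 0) - (\<Sum>i\<in>UNIV. l j i * x i)) \<le> \<epsilon> * vnorm absv x)"
    using assms(5) ep unfolding has_diff0_def by blast
  from choice[OF this] obtain \<delta> where dj0: "\<forall>j. j < n \<longrightarrow> \<delta> j > 0 \<and> (\<forall>x. vnorm absv x < \<delta> j \<longrightarrow>
        absv (f j x - f j (\<lambda>_. 0) - (\<Sum>i\<in>UNIV. l j i * x i)) \<le> \<epsilon> * vnorm absv x)"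
    by blast
  have dj: "\<And>j. j < n \<Longrightarrow> \<delta> j > 0 \<and> (\<forall>x. vnorm absv x < \<delta> j \<longrightarrow>
        absv (f j x - f j (\<lambda>_. 0) - (\<Sum>i\<in>UNIV. l j i * x i)) \<le> \<epsilon> * vnorm absv x)"
    using dj0 by blast
  define \<delta>m where "\<delta>m = Min (\<delta> ` {..<n})"
  have dmp: "\<delta>m > 0" unfolding \<delta>m_def using nP dj by (subst Min_gr_iff) auto
  have dmle: "\<delta>m \<le> \<delta> j" if "j < n" for j unfolding \<delta>m_def using that by (intro Min_le) auto
  show ?thesis
  proof (intro exI[of _ a] conjI a(1) exI[of _ "absv a * r / \<delta>m"] allI impI)
    fix t assume t: "t \<noteq> 0 \<and> absv a * r / \<delta>m < absv t"
    have tp: "absv t > 0" using pos t by simp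
    have tR: "absv a * r < \<delta>m * absv t" using t dmp by (simp add: field_simps)
    show "funs_lin_indep_on n (\<lambda>j x. \<psi> (t * f j x)) (vscale (a / t) ` vball0 absv r)"
      unfolding funs_lin_indep_on_def
    proof (rule allI, rule impI)
      fix cf assume H: "\<forall>x\<in>vscale (a / t) ` vball0 absv r. (\<Sum>j<n. cf j * \<psi> (t * f j x)) = 0"
      have "\<forall>y\<in>S. (\<Sum>j<n. (cf j * \<psi> (t * f j (\<lambda>_. 0))) * \<chi> j y) = 0"
      proof
        fix y assume y: "y \<in> S"
        define x where "x = vscale (a / t) y"
        have yn: "vnorm absv y \<le> r" using y unfolding S_def vball0_def by simp
        have xn: "vnorm absv x \<le> absv a / absv t * r"
          unfolding vnorm_le x_def vscale_def
        proof
          fix i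
          have "absv (a / t * y i) = absv a / absv t * absv (y i)" using B(5) absv_div[OF na] by simp
          also have "\<dots> \<le> absv a / absv t * r" using vnorm_ge[of absv y i] yn ap tp
            by (intro mult_left_mono) auto
          finally show "absv (a / t * y i) \<le> absv a / absv t * r" .
        qed
        have "absv t * vnorm absv x \<le> r * absv a" using xn tp by (simp add: field_simps)
        hence "absv t * vnorm absv x < absv t * \<delta>m" using tR by (simp add: mult.commute)
        hence xd: "vnorm absv x < \<delta>m" using mult_less_cancel_left_pos[OF tp] by blast
        have "\<psi> (t * f j x) = \<psi> (t * f j (\<lambda>_. 0)) * \<chi> j y" if j: "j < n" for j
        proof -
          define e where "e = t * (f j x - f j (\<lambda>_. 0) - (\<Sum>i\<in>UNIV. l j i * x i))"
          have lin: "t * (\<Sum>i\<in>UNIV. l j i * x i) = a * (\<Sum>i\<in>UNIV. l j i * y i)"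
            unfolding sum_distrib_left x_def vscale_def using t by (intro sum.cong) auto
          have "absv e = absv t * absv (f j x - f j (\<lambda>_. 0) - (\<Sum>i\<in>UNIV. l j i * x i))"
            unfolding e_def using B(5) by simp
          also have "\<dots> \<le> absv t * (\<epsilon> * vnorm absv x)"
            using dj[OF j] xd dmle[OF j] tp by (intro mult_left_mono) auto
          also have "\<dots> \<le> absv t * (\<epsilon> * (absv a / absv t * r))"
            using xn tp ep by (intro mult_left_mono) auto
          also have "\<dots> = \<epsilon> * (absv a * r)" using tp by (simp add: field_simps)
          also have "\<dots> < \<delta>0"
          proof -
            have c: "absv a * r + 1 > 0" using ap assms(3) by (simp add: add_pos_pos)
            have "\<delta>0 * (absv a * r) < \<delta>0 * (absv a * r + 1)" using d0(1) by simp
            thus ?thesis unfolding \<epsilon>_def using c by (simp add: pos_divide_less_eq)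
          qed
          finally have "\<psi> e = 1" using d0(2) by blast
          have "t * f j x = (t * f j (\<lambda>_. 0) + a * (\<Sum>i\<in>UNIV. l j i * y i)) + e"
            unfolding e_def using lin by (simp add: algebra_simps)
          hence "\<psi> (t * f j x) = \<psi> (t * f j (\<lambda>_. 0)) * \<chi> j y * \<psi> e"
            unfolding \<chi>_def by (simp add: add)
          thus ?thesis using \<open>\<psi> e = 1\<close> by simp
        qed
        hence "(\<Sum>j<n. (cf j * \<psi> (t * f j (\<lambda>_. 0))) * \<chi> j y) = (\<Sum>j<n. cf j * \<psi> (t * f j x))"
          by (intro sum.cong) auto
        also have "\<dots> = 0" using H y unfolding x_def S_def by blast
        finally show "(\<Sum>j<n. (cf j * \<psi> (t * f j (\<lambda>_. 0))) * \<chi> j y) = 0" .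
      qed
      hence "\<forall>j<n. cf j * \<psi> (t * f j (\<lambda>_. 0)) = 0"
        using artin'[rule_format, of "\<lambda>j. cf j * \<psi> (t * f j (\<lambda>_. 0))"] by simp
      thus "\<forall>j<n. cf j = 0" using nz by simp
    qed
  qed
qed

end
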